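(* Let $n\in\mathbb{N}_0$ and $r\in\mathbb{N}$, let $I$ be an open interval, and let $f_i:I\to\mathbb{R}$ ($i=1,\ldots,r$) and $g:I\to\mathbb{R}$ be functions which have a derivative of order $n$ on $I$. Suppose that $\mathbf{c}=(c_1,\ldots,c_r)\in\mathbb{R}^r$ satisfies $c_1+\cdots+c_r=0$. Then, for every $\mathbf{s}=(s_1,\ldots,s_r)\in(\mathbb{Z}_{\ge0})^r$ with $|\mathbf{s}|\le n$, \[ \sum_{|\mathbf{k}|=n}\binom{n}{\mathbf{k}}\prod_{i=1}^{r}c_i^{k_i}\left(f_i g^{k_i}\right)^{(s_i)}= \begin{cases} 0, & |\mathbf{s}|<n,\\[2mm] n!\left(\prod_{i=1}^{r}c_i^{s_i}\right)\left(\prod_{i=1}^{r}f_i\right)\left(g'\right)^{|\mathbf{s}|}, & |\mathbf{s}|=n. \end{cases} \]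
   Context: For $\mathbf{k}=(k_1,\ldots,k_r)\in\mathbb{Z}^r$, $|\mathbf{k}|=k_1+\cdots+k_r$. The sum $\sum_{|\mathbf{k}|=n}$ runs over all $\mathbf{k}\in(\mathbb{Z}_{\ge0})^r$ with $|\mathbf{k}|=n$, and $\binom{n}{\mathbf{k}}=\frac{n!}{k_1!\cdots k_r!\,(n-|\mathbf{k}|)!}$, i.e. the multinomial coefficient $\frac{n!}{k_1!\cdots k_r!}$ when $|\mathbf{k}|=n$. $h^{(s)}$ denotes the $s$-th derivative of $h$ (with $h^{(0)}=h$), and the conventions $c^0=1$ (including $0^0=1$) and $g^0=1$ are used. *)

theory Defs
  imports "HOL-Analysis.Analysis"
begin

definition has_nth_deriv_on :: "nat \<Rightarrow> (real \<Rightarrow> real) \<Rightarrow> real set \<Rightarrow> bool" where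
  "has_nth_deriv_on n h I \<longleftrightarrow>
     (\<forall>k<n. \<forall>x\<in>I. ((deriv ^^ k) h) differentiable (at x))"

definition multi_indices :: "nat \<Rightarrow> nat \<Rightarrow> (nat \<Rightarrow> nat) set" where
  "multi_indices r n = {k. (\<forall>i. i \<notin> {1..r} \<longrightarrow> k i = 0) \<and> (\<Sum>i=1..r. k i) = n}"

definition multinom :: "nat \<Rightarrow> nat \<Rightarrow> (nat \<Rightarrow> nat) \<Rightarrow> real" where
  "multinom r n k = fact n / (\<Prod>i=1..r. fact (k i))"

end

theory Submission
  imports Defs
begin


lemma hnd_Suc: "has_nth_deriv_on (Suc N) h I \<longleftrightarrow>
   (\<forall>x\<in>I. h differentiable at x) \<and> has_nth_deriv_on N (deriv h) I"
  unfolding has_nth_deriv_on_def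
  apply (auto simp del: funpow.simps simp: funpow_Suc_right)
  subgoal for k x by (cases k) (auto simp del: funpow.simps simp: funpow_Suc_right)
  done

lemma hnd_mono: "M \<le> N \<Longrightarrow> has_nth_deriv_on N h I \<Longrightarrow> has_nth_deriv_on M h I"
  unfolding has_nth_deriv_on_def by auto

lemma hderiv_cong:
  assumes "open I" "\<And>y. y \<in> I \<Longrightarrow> a y = b y" "y \<in> I"
  shows "(deriv ^^ k) a y = (deriv ^^ k) b y"
proof (rule higher_deriv_cong_ev)
  show "\<forall>\<^sub>F x in nhds y. a x = b x"
    using eventually_nhds_in_open[OF assms(1,3)] by (rule eventually_mono) (use assms(2) in auto)
qed simp

lemma hnd_cong:
  assumes "open I" "\<And>y. y \<in> I \<Longrightarrow> a y = b y" "has_nth_deriv_on N a I"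
  shows "has_nth_deriv_on N b I"
  unfolding has_nth_deriv_on_def
proof (intro allI impI ballI)
  fix k x assume k: "k < N" and x: "x \<in> I"
  have "((deriv ^^ k) a) differentiable at x" using assms(3) k x unfolding has_nth_deriv_on_def by auto
  then obtain D where D: "((deriv ^^ k) a has_derivative D) (at x)" unfolding differentiable_def by blast
  have "((deriv ^^ k) b has_derivative D) (at x)"
    by (rule has_derivative_transform_within_open[OF D assms(1) x]) (use hderiv_cong[OF assms(1,2)] in auto)
  then show "((deriv ^^ k) b) differentiable at x" unfolding differentiable_def by blast
qed

lemma deriv_real_add:
  fixes a b :: "real \<Rightarrow> real"
  assumes "a differentiable at y" "b differentiable at y"
  shows "deriv (\<lambda>z. a z + b z) y = deriv a y + deriv b y"
  using assms by (intro DERIV_imp_deriv) (auto intro!: derivative_eq_intros simp: DERIV_deriv_iff_real_differentiable[symmetric])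

lemma deriv_real_mult:
  fixes a b :: "real \<Rightarrow> real"
  assumes "a differentiable at y" "b differentiable at y"
  shows "deriv (\<lambda>z. a z * b z) y = deriv a y * b y + a y * deriv b y"
  using assms by (intro DERIV_imp_deriv) (auto intro!: derivative_eq_intros simp: DERIV_deriv_iff_real_differentiable[symmetric])

lemma deriv_real_cmult:
  fixes a :: "real \<Rightarrow> real"
  assumes "a differentiable at y"
  shows "deriv (\<lambda>z. K * a z) y = K * deriv a y"
  using assms by (intro DERIV_imp_deriv) (auto intro!: derivative_eq_intros simp: DERIV_deriv_iff_real_differentiable[symmetric])

lemma hnd_add:
  assumes "open I" "has_nth_deriv_on N a I" "has_nth_deriv_on N b I"
  shows "has_nth_deriv_on N (\<lambda>y. a y + b y) I"
  using assms(2,3)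
proof (induction N arbitrary: a b)
  case 0 then show ?case by (simp add: has_nth_deriv_on_def)
next
  case (Suc N)
  have da: "\<forall>x\<in>I. a differentiable at x" "has_nth_deriv_on N (deriv a) I" using Suc.prems(1) hnd_Suc by auto
  have db: "\<forall>x\<in>I. b differentiable at x" "has_nth_deriv_on N (deriv b) I" using Suc.prems(2) hnd_Suc by auto
  have "has_nth_deriv_on N (\<lambda>y. deriv a y + deriv b y) I" using Suc.IH da db by blast
  then have "has_nth_deriv_on N (deriv (\<lambda>y. a y + b y)) I"
    by (rule hnd_cong[OF assms(1), rotated]) (use da db deriv_real_add in auto)
  then show ?case using da db by (auto simp: hnd_Suc)
qed

lemma hnd_mult:
  assumes "open I" "has_nth_deriv_on N a I" "has_nth_deriv_on N b I"
  shows "has_nth_deriv_on N (\<lambda>y. a y * b y) I"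
  using assms(2,3)
proof (induction N arbitrary: a b)
  case 0 then show ?case by (simp add: has_nth_deriv_on_def)
next
  case (Suc N)
  have da: "\<forall>x\<in>I. a differentiable at x" "has_nth_deriv_on N (deriv a) I" using Suc.prems(1) hnd_Suc by auto
  have db: "\<forall>x\<in>I. b differentiable at x" "has_nth_deriv_on N (deriv b) I" using Suc.prems(2) hnd_Suc by auto
  have a: "has_nth_deriv_on N a I" "has_nth_deriv_on N b I" using Suc.prems hnd_mono[of N "Suc N"] by auto
  have "has_nth_deriv_on N (\<lambda>y. deriv a y * b y + a y * deriv b y) I"
    using Suc.IH da db a by (intro hnd_add assms(1)) auto
  then have "has_nth_deriv_on N (deriv (\<lambda>y. a y * b y)) I"
    by (rule hnd_cong[OF assms(1), rotated]) (use da db deriv_real_mult in auto)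
  then show ?case using da db by (auto simp: hnd_Suc)
qed

lemma hnd_const: "has_nth_deriv_on N (\<lambda>y. K) I"
proof (induction N arbitrary: K)
  case 0 then show ?case by (simp add: has_nth_deriv_on_def)
next
  case (Suc N) then show ?case by (simp add: hnd_Suc)
qed

lemma hnd_power:
  assumes "open I" "has_nth_deriv_on N g I"
  shows "has_nth_deriv_on N (\<lambda>y. g y ^ k) I"
proof (induction k)
  case 0 then show ?case by (simp add: hnd_const)
next
  case (Suc k) then show ?case using hnd_mult[OF assms(1,2) Suc] by simp
qed

lemma hderiv_add:
  assumes "open I" "has_nth_deriv_on m a I" "has_nth_deriv_on m b I" "y \<in> I"
  shows "(deriv ^^ m) (\<lambda>y. a y + b y) y = (deriv ^^ m) a y + (deriv ^^ m) b y"
  using assms(2-4)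
proof (induction m arbitrary: a b y)
  case 0 then show ?case by simp
next
  case (Suc m)
  have da: "\<forall>x\<in>I. a differentiable at x" "has_nth_deriv_on m (deriv a) I" using Suc.prems(1) hnd_Suc by auto
  have db: "\<forall>x\<in>I. b differentiable at x" "has_nth_deriv_on m (deriv b) I" using Suc.prems(2) hnd_Suc by auto
  have "(deriv ^^ Suc m) (\<lambda>y. a y + b y) y = (deriv ^^ m) (deriv (\<lambda>y. a y + b y)) y"
    by (simp del: funpow.simps add: funpow_Suc_right)
  also have "\<dots> = (deriv ^^ m) (\<lambda>y. deriv a y + deriv b y) y"
    by (rule hderiv_cong[OF assms(1) _ Suc.prems(3)]) (use da db deriv_real_add in auto)
  also have "\<dots> = (deriv ^^ m) (deriv a) y + (deriv ^^ m) (deriv b) y"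
    using Suc.IH da db Suc.prems(3) by blast
  finally show ?case by (simp del: funpow.simps add: funpow_Suc_right)
qed

lemma hderiv_cmult:
  assumes "open I" "has_nth_deriv_on m a I" "y \<in> I"
  shows "(deriv ^^ m) (\<lambda>y. K * a y) y = K * (deriv ^^ m) a y"
  using assms(2-3)
proof (induction m arbitrary: a y)
  case 0 then show ?case by simp
next
  case (Suc m)
  have da: "\<forall>x\<in>I. a differentiable at x" "has_nth_deriv_on m (deriv a) I" using Suc.prems(1) hnd_Suc by auto
  have "(deriv ^^ Suc m) (\<lambda>y. K * a y) y = (deriv ^^ m) (deriv (\<lambda>y. K * a y)) y"
    by (simp del: funpow.simps add: funpow_Suc_right)
  also have "\<dots> = (deriv ^^ m) (\<lambda>y. K * deriv a y) y"
    by (rule hderiv_cong[OF assms(1) _ Suc.prems(2)]) (use da deriv_real_cmult in auto)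
  also have "\<dots> = K * (deriv ^^ m) (deriv a) y"
    using Suc.IH da Suc.prems(2) by blast
  finally show ?case by (simp del: funpow.simps add: funpow_Suc_right)
qed



lemma MI_finite: "finite (multi_indices r n)"
proof -
  have "multi_indices r n \<subseteq> (\<lambda>h i. if i \<in> {1..r} then h i else 0) ` (PiE {1..r} (\<lambda>_. {0..n}))"
  proof
    fix k assume k: "k \<in> multi_indices r n"
    have le: "k i \<le> n" if "i \<in> {1..r}" for i
      using k that member_le_sum[of i "{1..r}" k] unfolding multi_indices_def by auto
    show "k \<in> (\<lambda>h i. if i \<in> {1..r} then h i else 0) ` (PiE {1..r} (\<lambda>_. {0..n}))"
      by (rule image_eqI[where x="restrict k {1..r}"]) (use k le in \<open>auto simp: multi_indices_def\<close>)
  qed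
  moreover have "finite (PiE {1..r} (\<lambda>_. {0..n::nat}))" by (intro finite_PiE) auto
  ultimately show ?thesis by (meson finite_surj)
qed

lemma MI_0: "multi_indices r 0 = {\<lambda>_. 0}"
proof -
  have "k = (\<lambda>_. 0)" if "k \<in> multi_indices r 0" for k
  proof
    fix i show "k i = 0"
    proof (cases "i \<in> {1..r}")
      case True then show ?thesis using that unfolding multi_indices_def by simp
    next
      case False then show ?thesis using that unfolding multi_indices_def by simp
    qed
  qed
  then show ?thesis unfolding multi_indices_def by auto
qed

lemma sum_upd:
  fixes k :: "nat \<Rightarrow> 'a::comm_monoid_add"
  assumes "j \<in> A" "finite A"
  shows "sum (k(j := v)) A = v + sum k (A - {j})"
  by (subst sum.remove[OF assms(2,1)]) (auto intro!: sum.cong)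

lemma prod_upd:
  fixes k :: "nat \<Rightarrow> 'a::comm_monoid_mult"
  assumes "j \<in> A" "finite A"
  shows "prod (k(j := v)) A = v * prod k (A - {j})"
  by (subst prod.remove[OF assms(2,1)]) (auto intro!: prod.cong)

lemma multinom_step:
  assumes j: "j \<in> {1..r}"
  shows "multinom r (Suc n) (k(j := Suc (k j))) * real (Suc (k j)) = real (Suc n) * multinom r n k"
proof -
  let ?P = "(\<Prod>i=1..r. fact (k i) :: real)"
  have P0: "?P \<noteq> 0" by (simp add: prod_zero_iff)
  have "(\<Prod>i=1..r. fact ((k(j := Suc (k j))) i) :: real) = fact (Suc (k j)) * (\<Prod>i\<in>{1..r}-{j}. fact (k i))"
    by (subst prod.remove[OF _ j]) (auto intro!: prod.cong)
  also have "\<dots> = real (Suc (k j)) * ?P"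
    using prod.remove[OF _ j, of "\<lambda>i. fact (k i) :: real"] by (simp add: fact_Suc)
  finally have e: "(\<Prod>i=1..r. fact ((k(j := Suc (k j))) i) :: real) = real (Suc (k j)) * ?P" .
  have aux: "\<And>a b c P::real. a \<noteq> 0 \<Longrightarrow> P \<noteq> 0 \<Longrightarrow> (b*c)/(a*P)*a = b*(c/P)" by simp
  show ?thesis unfolding multinom_def e fact_Suc[of n] using P0
    by (subst aux) auto
qed

lemma MI_upd:
  assumes j: "j \<in> {1..r}" and k: "k \<in> multi_indices r n"
  shows "k(j := Suc (k j)) \<in> multi_indices r (Suc n)"
proof -
  have "(\<Sum>i=1..r. (k(j := Suc (k j))) i) = Suc (k j) + (\<Sum>i\<in>{1..r}-{j}. k i)"
    using sum_upd[OF j, of k "Suc (k j)"] by simp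
  also have "\<dots> = Suc n" using k j sum.remove[OF _ j, of k] unfolding multi_indices_def by simp
  finally show ?thesis using k j unfolding multi_indices_def by auto
qed

lemma MI_dn:
  assumes j: "j \<in> {1..r}" and k: "k \<in> multi_indices r (Suc n)" and kj: "k j \<noteq> 0"
  shows "k(j := k j - 1) \<in> multi_indices r n"
proof -
  have "(\<Sum>i=1..r. (k(j := k j - 1)) i) = (k j - 1) + (\<Sum>i\<in>{1..r}-{j}. k i)"
    using sum_upd[OF j, of k "k j - 1"] by simp
  also have "\<dots> = n" using k j kj sum.remove[OF _ j, of k] unfolding multi_indices_def by simp
  finally show ?thesis using k j unfolding multi_indices_def by auto
qed

lemma key_L:
  assumes j: "j \<in> {1..r}"
  shows "(\<Sum>k\<in>multi_indices r (Suc n). multinom r (Suc n) k * real (k j) * F k)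
       = real (Suc n) * (\<Sum>k\<in>multi_indices r n. multinom r n k * F (k(j := Suc (k j))))"
proof -
  have "(\<Sum>k\<in>multi_indices r (Suc n). multinom r (Suc n) k * real (k j) * F k)
      = (\<Sum>k\<in>{k\<in>multi_indices r (Suc n). k j \<noteq> 0}. multinom r (Suc n) k * real (k j) * F k)"
    by (rule sum.mono_neutral_right) (auto simp: MI_finite)
  also have "\<dots> = (\<Sum>k\<in>multi_indices r n. real (Suc n) * (multinom r n k * F (k(j := Suc (k j)))))"
  proof (rule sym, rule sum.reindex_bij_witness[where j="\<lambda>k. k(j := Suc (k j))" and i="\<lambda>k. k(j := k j - 1)"])
    fix a assume "a \<in> multi_indices r n"
    then show "a(j := Suc (a j)) \<in> {k \<in> multi_indices r (Suc n). k j \<noteq> 0}" using MI_upd[OF j] by auto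
  next
    fix a assume "a \<in> multi_indices r n"
    show "(a(j := Suc (a j)))(j := (a(j := Suc (a j))) j - 1) = a" by simp
  next
    fix a assume "a \<in> multi_indices r n"
    show "multinom r (Suc n) (a(j := Suc (a j))) * real ((a(j := Suc (a j))) j) * F (a(j := Suc (a j)))
          = real (Suc n) * (multinom r n a * F (a(j := Suc (a j))))"
      using multinom_step[OF j, of n a] by simp
  next
    fix b assume "b \<in> {k \<in> multi_indices r (Suc n). k j \<noteq> 0}"
    then show "b(j := b j - 1) \<in> multi_indices r n" using MI_dn[OF j] by auto
  next
    fix b assume "b \<in> {k \<in> multi_indices r (Suc n). k j \<noteq> 0}"
    then show "(b(j := b j - 1))(j := Suc ((b(j := b j - 1)) j)) = b" by auto
  qed
  finally show ?thesis by (simp add: sum_distrib_left)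
qed

lemma key_R:
  shows "(\<Sum>k\<in>multi_indices r (Suc n). multinom r (Suc n) k * F k)
       = (\<Sum>j=1..r. \<Sum>k\<in>multi_indices r n. multinom r n k * F (k(j := Suc (k j))))"
proof -
  have "(\<Sum>k\<in>multi_indices r (Suc n). multinom r (Suc n) k * F k)
      = (\<Sum>k\<in>multi_indices r (Suc n). (\<Sum>j=1..r. multinom r (Suc n) k * real (k j) * F k) / real (Suc n))"
  proof (rule sum.cong[OF refl])
    fix k assume "k \<in> multi_indices r (Suc n)"
    then have "(\<Sum>j=1..r. real (k j)) = real (Suc n)" unfolding multi_indices_def
      by (metis (mono_tags, lifting) mem_Collect_eq of_nat_sum)
    then have "(\<Sum>j=1..r. multinom r (Suc n) k * real (k j) * F k) = multinom r (Suc n) k * F k * real (Suc n)"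
      by (simp add: sum_distrib_left[symmetric] sum_distrib_right[symmetric] mult.commute mult.left_commute)
    then show "multinom r (Suc n) k * F k = (\<Sum>j=1..r. multinom r (Suc n) k * real (k j) * F k) / real (Suc n)"
      by simp
  qed
  also have "\<dots> = (\<Sum>k\<in>multi_indices r (Suc n). \<Sum>j=1..r. multinom r (Suc n) k * real (k j) * F k) / real (Suc n)"
    by (rule sum_divide_distrib[symmetric])
  also have "\<dots> = (\<Sum>j=1..r. \<Sum>k\<in>multi_indices r (Suc n). multinom r (Suc n) k * real (k j) * F k) / real (Suc n)"
    by (subst sum.swap) (rule refl)
  also have "\<dots> = (\<Sum>j=1..r. real (Suc n) * (\<Sum>k\<in>multi_indices r n. multinom r n k * F (k(j := Suc (k j))))) / real (Suc n)"
    by (rule arg_cong[where f="\<lambda>x. x / real (Suc n)"], rule sum.cong[OF refl], rule key_L) 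
  also have "\<dots> = (\<Sum>j=1..r. \<Sum>k\<in>multi_indices r n. multinom r n k * F (k(j := Suc (k j))))"
  proof -
    have eq: "(\<Sum>j=1..r. real (Suc n) * (\<Sum>k\<in>multi_indices r n. multinom r n k * F (k(j := Suc (k j)))))
       = real (Suc n) * (\<Sum>j=1..r. \<Sum>k\<in>multi_indices r n. multinom r n k * F (k(j := Suc (k j))))"
      by (rule sum_distrib_left[symmetric])
    have nz: "real (Suc n) \<noteq> 0" by (simp del: of_nat_Suc)
    show ?thesis unfolding eq by (rule nonzero_mult_div_cancel_left[OF nz])
  qed
  finally show ?thesis .
qed



definition Fk :: "nat \<Rightarrow> (nat\<Rightarrow>real) \<Rightarrow> (real\<Rightarrow>real) \<Rightarrow> real \<Rightarrow> (nat \<Rightarrow> real \<Rightarrow> real) \<Rightarrow> (nat\<Rightarrow>nat) \<Rightarrow> (nat\<Rightarrow>nat) \<Rightarrow> real" where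
  "Fk r c g x f s k = (\<Prod>i=1..r. c i ^ k i * (deriv ^^ s i) (\<lambda>y. f i y * g y ^ k i) x)"

lemma prod_rm:
  fixes G :: "nat \<Rightarrow> real"
  assumes "j \<in> {1..r}"
  shows "(\<Prod>i=1..r. G i) = G j * (\<Prod>i\<in>{1..r}-{j}. G i)"
  using prod.remove[OF _ assms, of G] by simp

lemma Fk_step:
  assumes j: "j \<in> {1..r}"
  shows "Fk r c g x f s (k(j := Suc (k j))) = c j * Fk r c g x (f(j := \<lambda>y. f j y * g y)) s k"
proof -
  let ?R = "(\<Prod>i\<in>{1..r}-{j}. c i ^ k i * (deriv ^^ s i) (\<lambda>y. f i y * g y ^ k i) x)"
  have "Fk r c g x f s (k(j := Suc (k j))) = (c j ^ Suc (k j) * (deriv ^^ s j) (\<lambda>y. f j y * g y ^ Suc (k j)) x) *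
     (\<Prod>i\<in>{1..r}-{j}. c i ^ (k(j := Suc (k j))) i * (deriv ^^ s i) (\<lambda>y. f i y * g y ^ (k(j := Suc (k j))) i) x)"
    unfolding Fk_def by (subst prod_rm[OF j]) simp
  also have "(\<Prod>i\<in>{1..r}-{j}. c i ^ (k(j := Suc (k j))) i * (deriv ^^ s i) (\<lambda>y. f i y * g y ^ (k(j := Suc (k j))) i) x) = ?R"
    by (rule prod.cong) auto
  also have "(\<lambda>y. f j y * g y ^ Suc (k j)) = (\<lambda>y. f j y * g y * g y ^ k j)"
    by (simp add: mult.assoc)
  finally have L: "Fk r c g x f s (k(j := Suc (k j))) = (c j ^ Suc (k j) * (deriv ^^ s j) (\<lambda>y. f j y * g y * g y ^ k j) x) * ?R" .
  have "Fk r c g x (f(j := \<lambda>y. f j y * g y)) s k = (c j ^ k j * (deriv ^^ s j) (\<lambda>y. f j y * g y * g y ^ k j) x) *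
     (\<Prod>i\<in>{1..r}-{j}. c i ^ k i * (deriv ^^ s i) (\<lambda>y. (f(j := \<lambda>y. f j y * g y)) i y * g y ^ k i) x)"
    unfolding Fk_def by (subst prod_rm[OF j]) simp
  also have "(\<Prod>i\<in>{1..r}-{j}. c i ^ k i * (deriv ^^ s i) (\<lambda>y. (f(j := \<lambda>y. f j y * g y)) i y * g y ^ k i) x) = ?R"
    by (rule prod.cong) auto
  finally have R: "Fk r c g x (f(j := \<lambda>y. f j y * g y)) s k = (c j ^ k j * (deriv ^^ s j) (\<lambda>y. f j y * g y * g y ^ k j) x) * ?R" .
  show ?thesis unfolding L R by (simp add: mult_ac)
qed

lemma deriv_fgk:
  fixes a g :: "real \<Rightarrow> real"
  assumes "a differentiable at y" "g differentiable at y"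
  shows "deriv (\<lambda>y. a y * g y ^ n) y = deriv a y * g y ^ n + real n * (a y * deriv g y * g y ^ (n - 1))"
proof -
  have da: "(a has_real_derivative deriv a y) (at y)" and dg: "(g has_real_derivative deriv g y) (at y)"
    using assms DERIV_deriv_iff_real_differentiable by blast+
  have "deriv (\<lambda>y. a y * g y ^ n) y = a y * (real n * (deriv g y * g y ^ (n - Suc 0))) + deriv a y * g y ^ n"
    by (rule DERIV_imp_deriv[OF DERIV_mult'[OF da DERIV_power[OF dg, of n]]])
  then show ?thesis by (simp add: algebra_simps)
qed

lemma Fk_split:
  assumes I: "open I" and x: "x \<in> I" and j: "j \<in> {1..r}" and sj: "s j = Suc m"
    and hf: "has_nth_deriv_on (Suc N') (f j) I" and hg: "has_nth_deriv_on (Suc N') g I" and mN: "m \<le> N'"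
  shows "Fk r c g x f s k = Fk r c g x (f(j := deriv (f j))) (s(j := m)) k
     + real (k j) * (if k j = 0 then 0 else c j * Fk r c g x (f(j := \<lambda>y. f j y * deriv g y)) (s(j := m)) (k(j := k j - 1)))"
proof -
  define A where "A = (\<lambda>y. deriv (f j) y * g y ^ k j)"
  define B where "B = (\<lambda>y. f j y * deriv g y * g y ^ (k j - 1))"
  let ?R = "(\<Prod>i\<in>{1..r}-{j}. c i ^ k i * (deriv ^^ s i) (\<lambda>y. f i y * g y ^ k i) x)"
  have F0: "Fk r c g x f s k = (c j ^ k j * (deriv ^^ Suc m) (\<lambda>y. f j y * g y ^ k j) x) * ?R"
    unfolding Fk_def by (subst prod_rm[OF j]) (simp add: sj)
  have "Fk r c g x (f(j := deriv (f j))) (s(j := m)) k = (c j ^ k j * (deriv ^^ m) A x) *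
     (\<Prod>i\<in>{1..r}-{j}. c i ^ k i * (deriv ^^ (s(j := m)) i) (\<lambda>y. (f(j := deriv (f j))) i y * g y ^ k i) x)"
    unfolding Fk_def A_def by (subst prod_rm[OF j]) simp
  also have "(\<Prod>i\<in>{1..r}-{j}. c i ^ k i * (deriv ^^ (s(j := m)) i) (\<lambda>y. (f(j := deriv (f j))) i y * g y ^ k i) x) = ?R"
    by (rule prod.cong) auto
  finally have F1: "Fk r c g x (f(j := deriv (f j))) (s(j := m)) k = (c j ^ k j * (deriv ^^ m) A x) * ?R" .
  have F2: "Fk r c g x (f(j := \<lambda>y. f j y * deriv g y)) (s(j := m)) (k(j := k j - 1)) = (c j ^ (k j - 1) * (deriv ^^ m) B x) * ?R"
  proof -
    have "Fk r c g x (f(j := \<lambda>y. f j y * deriv g y)) (s(j := m)) (k(j := k j - 1)) = (c j ^ (k j - 1) * (deriv ^^ m) B x) *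
     (\<Prod>i\<in>{1..r}-{j}. c i ^ (k(j := k j - 1)) i * (deriv ^^ (s(j := m)) i) (\<lambda>y. (f(j := \<lambda>y. f j y * deriv g y)) i y * g y ^ (k(j := k j - 1)) i) x)"
      unfolding Fk_def B_def by (subst prod_rm[OF j]) simp
    also have "(\<Prod>i\<in>{1..r}-{j}. c i ^ (k(j := k j - 1)) i * (deriv ^^ (s(j := m)) i) (\<lambda>y. (f(j := \<lambda>y. f j y * deriv g y)) i y * g y ^ (k(j := k j - 1)) i) x) = ?R"
      by (rule prod.cong) auto
    finally show ?thesis .
  qed
  have fd: "\<forall>y\<in>I. f j differentiable at y" and hf': "has_nth_deriv_on N' (deriv (f j)) I"
    using hf hnd_Suc by auto
  have gd: "\<forall>y\<in>I. g differentiable at y" and hdg: "has_nth_deriv_on N' (deriv g) I"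
    using hg hnd_Suc by auto
  have hf0: "has_nth_deriv_on N' (f j) I" and hg0: "has_nth_deriv_on N' g I"
    using hf hg hnd_mono[of N' "Suc N'"] by auto
  have hA: "has_nth_deriv_on m A I" unfolding A_def
    by (rule hnd_mono[OF mN], rule hnd_mult[OF I hf' hnd_power[OF I hg0]])
  have hB: "has_nth_deriv_on m B I" unfolding B_def
    by (rule hnd_mono[OF mN], rule hnd_mult[OF I hnd_mult[OF I hf0 hdg] hnd_power[OF I hg0]])
  have hB': "has_nth_deriv_on m (\<lambda>y. real (k j) * B y) I"
    by (rule hnd_mult[OF I hnd_const hB])
  have "(deriv ^^ Suc m) (\<lambda>y. f j y * g y ^ k j) x = (deriv ^^ m) (deriv (\<lambda>y. f j y * g y ^ k j)) x"
    by (simp del: funpow.simps add: funpow_Suc_right)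
  also have "\<dots> = (deriv ^^ m) (\<lambda>y. A y + real (k j) * B y) x"
    by (rule hderiv_cong[OF I _ x]) (use fd gd deriv_fgk in \<open>auto simp: A_def B_def\<close>)
  also have "\<dots> = (deriv ^^ m) A x + (deriv ^^ m) (\<lambda>y. real (k j) * B y) x"
    by (rule hderiv_add[OF I hA hB' x])
  also have "(deriv ^^ m) (\<lambda>y. real (k j) * B y) x = real (k j) * (deriv ^^ m) B x"
    by (rule hderiv_cmult[OF I hB x])
  finally have D: "(deriv ^^ Suc m) (\<lambda>y. f j y * g y ^ k j) x = (deriv ^^ m) A x + real (k j) * (deriv ^^ m) B x" .
  show ?thesis
  proof (cases "k j")
    case 0
    then show ?thesis unfolding F0 F1 D by simp
  next
    case (Suc p)
    then show ?thesis unfolding F0 F1 F2 D by (simp add: algebra_simps)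
  qed
qed



lemma main_ind:
  fixes c :: "nat \<Rightarrow> real" and g :: "real \<Rightarrow> real"
  assumes I: "open I" and x: "x \<in> I" and c0: "(\<Sum>i=1..r. c i) = 0"
  shows "\<And>f s N. (\<forall>i\<in>{1..r}. has_nth_deriv_on N (f i) I) \<Longrightarrow> has_nth_deriv_on N g I
     \<Longrightarrow> (\<Sum>i=1..r. s i) \<le> N \<Longrightarrow> (\<Sum>i=1..r. s i) \<le> n
     \<Longrightarrow> (\<Sum>k\<in>multi_indices r n. multinom r n k * Fk r c g x f s k)
       = (if (\<Sum>i=1..r. s i) < n then 0
          else fact n * (\<Prod>i=1..r. c i ^ s i) * (\<Prod>i=1..r. f i x) * deriv g x ^ (\<Sum>i=1..r. s i))"
proof (induction n)
  case 0
  fix f s N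
  assume "(\<Sum>i=1..r. s i) \<le> (0::nat)"
  then have s0: "\<forall>i\<in>{1..r}. s i = 0" by simp
  then have ss: "(\<Sum>i=1..r. s i) = 0" by simp
  have m: "multinom r 0 (\<lambda>_. 0) = 1" by (simp add: multinom_def)
  have "Fk r c g x f s (\<lambda>_. 0) = (\<Prod>i=1..r. f i x)"
    unfolding Fk_def by (rule prod.cong) (use s0 in auto)
  moreover have "(\<Prod>i=1..r. c i ^ s i) = 1" using s0 by simp
  ultimately show "(\<Sum>k\<in>multi_indices r 0. multinom r 0 k * Fk r c g x f s k)
       = (if (\<Sum>i=1..r. s i) < 0 then 0
          else fact 0 * (\<Prod>i=1..r. c i ^ s i) * (\<Prod>i=1..r. f i x) * deriv g x ^ (\<Sum>i=1..r. s i))"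
    unfolding MI_0 ss using m by simp
next
  case (Suc n)
  have A: "(\<Sum>k\<in>multi_indices r (Suc n). multinom r (Suc n) k * Fk r c g x f s k) = 0"
    if hf: "\<forall>i\<in>{1..r}. has_nth_deriv_on N (f i) I" and hg: "has_nth_deriv_on N g I"
      and sN: "(\<Sum>i=1..r. s i) \<le> N" and sn: "(\<Sum>i=1..r. s i) \<le> n" for f s N
  proof -
    define f' where "f' = (\<lambda>j. f(j := \<lambda>y. f j y * g y))"
    have hf': "\<forall>i\<in>{1..r}. has_nth_deriv_on N (f' j i) I" if "j \<in> {1..r}" for j
      using hf that hnd_mult[OF I _ hg] by (auto simp: f'_def)
    have "(\<Sum>k\<in>multi_indices r (Suc n). multinom r (Suc n) k * Fk r c g x f s k)
        = (\<Sum>j=1..r. \<Sum>k\<in>multi_indices r n. multinom r n k * Fk r c g x f s (k(j := Suc (k j))))"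
      by (rule key_R)
    also have "\<dots> = (\<Sum>j=1..r. c j * (\<Sum>k\<in>multi_indices r n. multinom r n k * Fk r c g x (f' j) s k))"
      by (rule sum.cong[OF refl]) (simp add: Fk_step f'_def sum_distrib_left mult_ac)
    also have "\<dots> = (\<Sum>j=1..r. c j * (if (\<Sum>i=1..r. s i) < n then 0
          else fact n * (\<Prod>i=1..r. c i ^ s i) * (\<Prod>i=1..r. f' j i x) * deriv g x ^ (\<Sum>i=1..r. s i)))"
      by (rule sum.cong[OF refl]) (use Suc.IH[OF hf' hg sN sn] in auto)
    also have "\<dots> = 0"
    proof (cases "(\<Sum>i=1..r. s i) < n")
      case True then show ?thesis by simp
    next
      case False
      have "(\<Prod>i=1..r. f' j i x) = g x * (\<Prod>i=1..r. f i x)" if j: "j \<in> {1..r}" for j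
      proof -
        have "(\<Prod>i=1..r. f' j i x) = f' j j x * (\<Prod>i\<in>{1..r}-{j}. f' j i x)" by (rule prod_rm[OF j])
        also have "(\<Prod>i\<in>{1..r}-{j}. f' j i x) = (\<Prod>i\<in>{1..r}-{j}. f i x)"
          by (rule prod.cong) (auto simp: f'_def)
        also have "(\<Prod>i=1..r. f i x) = f j x * (\<Prod>i\<in>{1..r}-{j}. f i x)" by (rule prod_rm[OF j])
        ultimately show ?thesis by (simp add: f'_def)
      qed
      then have "(\<Sum>j=1..r. c j * (if (\<Sum>i=1..r. s i) < n then 0
          else fact n * (\<Prod>i=1..r. c i ^ s i) * (\<Prod>i=1..r. f' j i x) * deriv g x ^ (\<Sum>i=1..r. s i)))
        = (\<Sum>j=1..r. c j * (fact n * (\<Prod>i=1..r. c i ^ s i) * (g x * (\<Prod>i=1..r. f i x)) * deriv g x ^ (\<Sum>i=1..r. s i)))"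
        using False by (intro sum.cong) auto
      also have "\<dots> = (\<Sum>j=1..r. c j) * (fact n * (\<Prod>i=1..r. c i ^ s i) * (g x * (\<Prod>i=1..r. f i x)) * deriv g x ^ (\<Sum>i=1..r. s i))"
        by (rule sum_distrib_right[symmetric])
      finally show ?thesis using c0 by simp
    qed
    finally show ?thesis .
  qed
  fix f s N
  assume hf: "\<forall>i\<in>{1..r}. has_nth_deriv_on N (f i) I" and hg: "has_nth_deriv_on N g I"
    and sN: "(\<Sum>i=1..r. s i) \<le> N" and sn: "(\<Sum>i=1..r. s i) \<le> Suc n"
  show "(\<Sum>k\<in>multi_indices r (Suc n). multinom r (Suc n) k * Fk r c g x f s k)
       = (if (\<Sum>i=1..r. s i) < Suc n then 0
          else fact (Suc n) * (\<Prod>i=1..r. c i ^ s i) * (\<Prod>i=1..r. f i x) * deriv g x ^ (\<Sum>i=1..r. s i))"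
  proof (cases "(\<Sum>i=1..r. s i) \<le> n")
    case True
    then show ?thesis using A[OF hf hg sN] by simp
  next
    case False
    then have ss: "(\<Sum>i=1..r. s i) = Suc n" using sn by simp
    then obtain j where j: "j \<in> {1..r}" and sj0: "s j \<noteq> 0"
      by (metis Zero_not_Suc sum.neutral)
    obtain m where sj: "s j = Suc m" using sj0 not0_implies_Suc by blast
    obtain N' where N: "N = Suc N'" using sN ss by (metis Suc_le_D)
    have sjle: "s j \<le> (\<Sum>i=1..r. s i)" by (rule member_le_sum) (use j in auto)
    have mN: "m \<le> N'" using sjle sN ss sj N by simp
    define s' where "s' = s(j := m)"
    define f1 where "f1 = f(j := deriv (f j))"
    define f2 where "f2 = f(j := \<lambda>y. f j y * deriv g y)"
    define H where "H = (\<lambda>k. if k j = 0 then 0 else c j * Fk r c g x f2 s' (k(j := k j - 1)))"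
    have ss': "(\<Sum>i=1..r. s' i) = n"
    proof -
      have "(\<Sum>i=1..r. s' i) = m + (\<Sum>i\<in>{1..r}-{j}. s i)" unfolding s'_def by (rule sum_upd[OF j]) simp
      moreover have "(\<Sum>i=1..r. s i) = s j + (\<Sum>i\<in>{1..r}-{j}. s i)" using sum.remove[OF _ j, of s] by simp
      ultimately show ?thesis using ss sj by simp
    qed
    have hfj: "has_nth_deriv_on (Suc N') (f j) I" using hf j N by auto
    have hgS: "has_nth_deriv_on (Suc N') g I" using hg N by simp
    have hdf: "has_nth_deriv_on N' (deriv (f j)) I" and hdg: "has_nth_deriv_on N' (deriv g) I"
      using hfj hgS hnd_Suc by auto
    have hf0: "\<forall>i\<in>{1..r}. has_nth_deriv_on N' (f i) I" and hg0: "has_nth_deriv_on N' g I"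
      using hf hg N hnd_mono[of N' "Suc N'"] by auto
    have hf1: "\<forall>i\<in>{1..r}. has_nth_deriv_on N' (f1 i) I" using hf0 hdf by (auto simp: f1_def)
    have hf2: "\<forall>i\<in>{1..r}. has_nth_deriv_on N' (f2 i) I"
      using hf0 hnd_mult[OF I _ hdg] j by (auto simp: f2_def)
    have sN': "(\<Sum>i=1..r. s' i) \<le> N'" using ss' sN ss N by simp
    have split: "Fk r c g x f s k = Fk r c g x f1 s' k + real (k j) * H k" for k
      unfolding f1_def s'_def H_def f2_def by (rule Fk_split[where f=f and s=s and g=g and c=c and k=k and N'=N' and m=m and r=r, OF I x j sj hfj hgS mN])
    have "(\<Sum>k\<in>multi_indices r (Suc n). multinom r (Suc n) k * Fk r c g x f s k)
        = (\<Sum>k\<in>multi_indices r (Suc n). multinom r (Suc n) k * Fk r c g x f1 s' k)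
          + (\<Sum>k\<in>multi_indices r (Suc n). multinom r (Suc n) k * real (k j) * H k)"
      unfolding split by (simp add: sum.distrib distrib_left mult.assoc)
    also have "(\<Sum>k\<in>multi_indices r (Suc n). multinom r (Suc n) k * Fk r c g x f1 s' k) = 0"
      by (rule A[OF hf1 hg0 sN']) (use ss' in simp)
    also have "(\<Sum>k\<in>multi_indices r (Suc n). multinom r (Suc n) k * real (k j) * H k)
        = real (Suc n) * (\<Sum>k\<in>multi_indices r n. multinom r n k * H (k(j := Suc (k j))))"
      by (rule key_L[OF j])
    also have "(\<Sum>k\<in>multi_indices r n. multinom r n k * H (k(j := Suc (k j))))
        = c j * (\<Sum>k\<in>multi_indices r n. multinom r n k * Fk r c g x f2 s' k)"
      by (simp add: H_def sum_distrib_left mult_ac)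
    also have "(\<Sum>k\<in>multi_indices r n. multinom r n k * Fk r c g x f2 s' k)
        = fact n * (\<Prod>i=1..r. c i ^ s' i) * (\<Prod>i=1..r. f2 i x) * deriv g x ^ n"
      using Suc.IH[OF hf2 hg0 sN'] ss' by simp
    also have "(\<Prod>i=1..r. c i ^ s' i) = c j ^ m * (\<Prod>i\<in>{1..r}-{j}. c i ^ s i)"
      unfolding s'_def by (subst prod_rm[OF j]) (auto intro!: prod.cong)
    also have "(\<Prod>i=1..r. f2 i x) = f j x * deriv g x * (\<Prod>i\<in>{1..r}-{j}. f i x)"
      unfolding f2_def by (subst prod_rm[OF j]) (auto intro!: prod.cong)
    finally have calc: "(\<Sum>k\<in>multi_indices r (Suc n). multinom r (Suc n) k * Fk r c g x f s k) =
      0 + real (Suc n) * (c j * (fact n * (c j ^ m * (\<Prod>i\<in>{1..r} - {j}. c i ^ s i)) *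
       (f j x * deriv g x * (\<Prod>i\<in>{1..r} - {j}. f i x)) * deriv g x ^ n))" .
    have pc: "(\<Prod>i=1..r. c i ^ s i) = c j ^ Suc m * (\<Prod>i\<in>{1..r}-{j}. c i ^ s i)"
      using prod_rm[OF j, of "\<lambda>i. c i ^ s i"] sj by simp
    have pf: "(\<Prod>i=1..r. f i x) = f j x * (\<Prod>i\<in>{1..r}-{j}. f i x)"
      by (rule prod_rm[OF j])
    show ?thesis unfolding ss calc pc pf by (simp add: fact_Suc algebra_simps del: of_nat_Suc)
  qed
qed


theorem corollary2:
  fixes n r :: nat and I :: "real set"
    and f :: "nat \<Rightarrow> real \<Rightarrow> real" and g :: "real \<Rightarrow> real"
    and c :: "nat \<Rightarrow> real" and s :: "nat \<Rightarrow> nat" and x :: real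
  assumes "r \<ge> 1"
    and "open I" and "is_interval I"
    and "\<And>i. i \<in> {1..r} \<Longrightarrow> has_nth_deriv_on n (f i) I"
    and "has_nth_deriv_on n g I"
    and "(\<Sum>i=1..r. c i) = 0"
    and "(\<Sum>i=1..r. s i) \<le> n"
    and "x \<in> I"
  shows "(\<Sum>k\<in>multi_indices r n. multinom r n k *
            (\<Prod>i=1..r. c i ^ k i * (deriv ^^ s i) (\<lambda>y. f i y * g y ^ k i) x))
         = (if (\<Sum>i=1..r. s i) < n then 0
            else fact n * (\<Prod>i=1..r. c i ^ s i) * (\<Prod>i=1..r. f i x)
                 * deriv g x ^ (\<Sum>i=1..r. s i))"
  using main_ind[where n=n and f=f and s=s and N=n and g=g and c=c and r=r, OF assms(2,8,6)] assms(4,5,7) unfolding Fk_def by blast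

end
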